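(* Call an edge $(u,v)$ of $G(n,r)$ long if $|uv|\ge\sqrt{\frac{8\ln n}{n}}$. Then w.h.p. none of the long edges of $G(n,r)$ is free (i.e. every long edge is crossed by some other edge of $G(n,r)$).
   Context: Here the $n$ points of $G(n,r)$ are chosen independently and uniformly at random on the unit torus (the unit square with wraparound); two points are joined by a straight-line edge iff their distance is at most $r=r(n)$. An edge of a geometric graph is free if its interior is not intersected by any other edge of the graph. "W.h.p." means with probability tending to $1$ as $n\to\infty$. *)

theory Defs
  imports "HOL-Probability.Probability"
begin

text \<open>The unit torus is represented by the unit square in real \<times> real; coordinates
  are taken modulo 1. \<close>

text \<open>Signed shortest displacement modulo 1 (a value in [-1/2, 1/2]).\<close>
definition tdisp :: "real \<Rightarrow> real" where
  "tdisp t = t - of_int (round t)"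

definition tvec :: "real \<times> real \<Rightarrow> real \<times> real \<Rightarrow> real \<times> real" where
  "tvec p q = (tdisp (fst q - fst p), tdisp (snd q - snd p))"

definition tdist :: "real \<times> real \<Rightarrow> real \<times> real \<Rightarrow> real" where
  "tdist p q = norm (tvec p q)"

text \<open>All lifts to the plane of the straight-line segment from p to q on the torus,
  with parameter s ranging over S (S = {0<..<1}: interior, S = {0..1}: closed edge).\<close>
definition edge_lift :: "real \<times> real \<Rightarrow> real \<times> real \<Rightarrow> real set \<Rightarrow> (real \<times> real) set" where
  "edge_lift p q S =
     {p + s *\<^sub>R tvec p q + (of_int a, of_int b) | s a b. s \<in> S}"

definition rgg_edge :: "(nat \<Rightarrow> real \<times> real) \<Rightarrow> real \<Rightarrow> nat \<Rightarrow> nat \<Rightarrow> bool" where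
  "rgg_edge x r i j \<longleftrightarrow> i \<noteq> j \<and> tdist (x i) (x j) \<le> r"

definition free_edge :: "nat \<Rightarrow> (nat \<Rightarrow> real \<times> real) \<Rightarrow> real \<Rightarrow> nat \<Rightarrow> nat \<Rightarrow> bool" where
  "free_edge n x r i j \<longleftrightarrow>
     \<not> (\<exists>k l. k < n \<and> l < n \<and> rgg_edge x r k l \<and> {k, l} \<noteq> {i, j} \<and>
            edge_lift (x i) (x j) {0<..<1} \<inter> edge_lift (x k) (x l) {0..1} \<noteq> {})"

definition torus_unif :: "(real \<times> real) measure" where
  "torus_unif = uniform_measure lborel ({0..1} \<times> {0..1})"

definition rgg_space :: "nat \<Rightarrow> (nat \<Rightarrow> real \<times> real) measure" where
  "rgg_space n = PiM {..<n} (\<lambda>_. torus_unif)"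

definition whp :: "(nat \<Rightarrow> (nat \<Rightarrow> real \<times> real) \<Rightarrow> bool) \<Rightarrow> bool" where
  "whp P \<longleftrightarrow> (\<exists>A. (\<forall>n. A n \<in> sets (rgg_space n) \<and>
                      A n \<subseteq> {x \<in> space (rgg_space n). P n x}) \<and>
                 (\<lambda>n. measure (rgg_space n) (A n)) \<longlonglongrightarrow> 1)"

end

theory Submission
  imports Defs "HOL-Real_Asymp.Real_Asymp"
begin


lemma fst_borel[measurable]: "(fst :: 'a::topological_space \<times> 'b::topological_space \<Rightarrow> 'a) \<in> borel \<rightarrow>\<^sub>M borel"
  by (intro borel_measurable_continuous_onI continuous_intros)
lemma snd_borel[measurable]: "(snd :: 'a::topological_space \<times> 'b::topological_space \<Rightarrow> 'b) \<in> borel \<rightarrow>\<^sub>M borel"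
  by (intro borel_measurable_continuous_onI continuous_intros)
lemma pair_borel[measurable (raw)]:
  fixes f :: "'c \<Rightarrow> 'a::second_countable_topology" and g :: "'c \<Rightarrow> 'b::second_countable_topology"
  shows "f \<in> M \<rightarrow>\<^sub>M borel \<Longrightarrow> g \<in> M \<rightarrow>\<^sub>M borel \<Longrightarrow> (\<lambda>x. (f x, g x)) \<in> M \<rightarrow>\<^sub>M borel"
  by (subst borel_prod[symmetric]) measurable

lemma tdisp_measurable[measurable]: "tdisp \<in> borel_measurable borel"
proof -
  have "tdisp = (\<lambda>t. t - real_of_int \<lfloor>t + 1/2\<rfloor>)"
    by (auto simp: tdisp_def round_def fun_eq_iff)
  show ?thesis unfolding \<open>tdisp = _\<close> by measurable
qed

definition cr :: "real \<times> real \<Rightarrow> real \<times> real \<Rightarrow> real" where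
  "cr a b = fst a * snd b - snd a * fst b"

definition mid :: "real \<times> real \<Rightarrow> real \<times> real \<Rightarrow> real \<times> real" where
  "mid u v = u + (1/2) *\<^sub>R tvec u v"

definition Tq :: "real \<Rightarrow> bool \<Rightarrow> real \<times> real \<Rightarrow> real \<times> real \<Rightarrow> (real \<times> real) set" where
  "Tq R s u v = {y. fst y \<in> {0..<1} \<and> snd y \<in> {0..<1} \<and>
     (\<exists>a\<in>{-1,0,1::int}. \<exists>b\<in>{-1,0,1::int}.
        dist (y + (of_int a, of_int b)) (mid u v) < R \<and>
        (if s then cr (tvec u v) (y + (of_int a, of_int b) - mid u v) \<ge> 0
         else cr (tvec u v) (y + (of_int a, of_int b) - mid u v) \<le> 0))}"

lemma Tq_pred[measurable]: "Measurable.pred borel (\<lambda>z::(real\<times>real)\<times>(real\<times>real)\<times>(real\<times>real). snd (snd z) \<in> Tq R s (fst z) (fst (snd z)))"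
  unfolding Tq_def tdist_def tvec_def mid_def cr_def
  by measurable

lemma tdist_meas[measurable]: "(\<lambda>z::(real\<times>real)\<times>(real\<times>real). tdist (fst z) (snd z)) \<in> borel_measurable borel"
  unfolding tdist_def tvec_def by measurable

lemma sets_torus[simp, measurable_cong]: "sets torus_unif = sets borel"
  by (simp add: torus_unif_def)

lemma comp_meas: "i < n \<Longrightarrow> (\<lambda>x. x i) \<in> rgg_space n \<rightarrow>\<^sub>M borel"
proof -
  assume "i < n"
  then have "(\<lambda>x. x i) \<in> rgg_space n \<rightarrow>\<^sub>M torus_unif"
    by (simp add: rgg_space_def)
  then show ?thesis by (simp add: measurable_def space_borel[symmetric] del: space_borel) (simp add: torus_unif_def)
qed

lemma bad_meas:
  assumes "i < n" "j < n" "J \<subseteq> {..<n}"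
  shows "{x \<in> space (rgg_space n). x i \<in> {0..1}\<times>{0..1} \<and> d0 \<le> tdist (x i) (x j) \<and>
    (\<forall>k\<in>J. x k \<notin> Tq R s (x i) (x j))} \<in> sets (rgg_space n)"
proof -
  have fJ: "finite J" using assms finite_subset by blast
  have m1: "(\<lambda>x. (x i, x j, x k)) \<in> measurable (rgg_space n) borel" if "k \<in> J" for k
    using assms that by (intro pair_borel comp_meas) auto
  have m2: "(\<lambda>x. (x i, x j)) \<in> measurable (rgg_space n) borel"
    using assms by (intro pair_borel comp_meas) auto
  have p1: "Measurable.pred (rgg_space n) (\<lambda>x. x i \<in> {0..1}\<times>{0..1})"
  proof -
    have "(\<lambda>x. x i) \<in> rgg_space n \<rightarrow>\<^sub>M borel"
      using assms by (intro comp_meas) auto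
    moreover have "Measurable.pred borel (\<lambda>u::real\<times>real. u \<in> {0..1}\<times>{0..1})"
      by (intro pred_sets2[OF borel_closed]) (auto intro: closed_Times)
    ultimately show ?thesis by (rule measurable_compose)
  qed
  have p2: "Measurable.pred (rgg_space n) (\<lambda>x. d0 \<le> tdist (x i) (x j))"
  proof -
    have "Measurable.pred borel (\<lambda>z::(real\<times>real)\<times>(real\<times>real). d0 \<le> tdist (fst z) (snd z))"
      by measurable
    from measurable_compose[OF m2 this] show ?thesis by simp
  qed
  have p3: "Measurable.pred (rgg_space n) (\<lambda>x. \<forall>k\<in>J. x k \<notin> Tq R s (x i) (x j))"
  proof (intro pred_intros_finite[OF fJ] pred_intros_logic)
    fix k assume "k \<in> J"
    from measurable_compose[OF m1[OF this] Tq_pred[of R s]]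
    show "Measurable.pred (rgg_space n) (\<lambda>x. x k \<in> Tq R s (x i) (x j))" by simp
  qed
  have "Measurable.pred (rgg_space n) (\<lambda>x. x i \<in> {0..1}\<times>{0..1} \<and> d0 \<le> tdist (x i) (x j) \<and>
    (\<forall>k\<in>J. x k \<notin> Tq R s (x i) (x j)))"
    using p1 p2 p3 by (intro pred_intros_logic)
  then show ?thesis by (simp add: Measurable.pred_def)
qed




lemma Q_lborel: "emeasure lborel ({0..1::real}\<times>{0..1::real}) = 1"
proof -
  have "{0..1::real}\<times>{0..1::real} = cbox (0,0) (1,1)"
    by (simp add: cbox_Pair_eq)
  then show ?thesis
    by (simp add: emeasure_lborel_cbox_eq Basis_prod_def inner_prod_def)
qed

lemma torus_prob: "prob_space torus_unif"
  unfolding torus_unif_def by (rule prob_space_uniform_measure) (simp_all add: Q_lborel)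

lemma torus_emeasure: "A \<in> sets borel \<Longrightarrow> emeasure torus_unif A = emeasure lborel (({0..1}\<times>{0..1}) \<inter> A)"
  unfolding torus_unif_def
  by (subst emeasure_uniform_measure) (auto simp: Q_lborel divide_ennreal_def intro: borel_closed closed_Times)

lemma Tq_sets: "Tq R s u v \<in> sets borel"
proof -
  have "(\<lambda>y::real\<times>real. (u, v, y)) \<in> borel \<rightarrow>\<^sub>M borel" by measurable
  from measurable_compose[OF this Tq_pred[of R s]] have "Measurable.pred borel (\<lambda>y. y \<in> Tq R s u v)"
    by simp
  then show ?thesis by (simp add: Measurable.pred_def)
qed

lemma Tq_sub: "Tq R s u v \<subseteq> {0..1}\<times>{0..1}"
  unfolding Tq_def by (auto simp: mem_Times_iff)

lemma torus_compl:
  assumes "ennreal \<alpha> \<le> emeasure lborel (Tq R s u v)" "0 \<le> \<alpha>"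
  shows "emeasure torus_unif (UNIV - Tq R s u v) \<le> ennreal (1 - \<alpha>)"
proof -
  have Qs: "({0..1}\<times>{0..1} :: (real\<times>real) set) \<in> sets borel"
    by (intro borel_closed closed_Times) auto
  have "emeasure torus_unif (UNIV - Tq R s u v) = emeasure lborel (({0..1}\<times>{0..1}) - Tq R s u v)"
    using Tq_sets by (subst torus_emeasure) (auto intro!: arg_cong[where f="emeasure lborel"])
  also have "\<dots> = emeasure lborel ({0..1::real}\<times>{0..1::real}) - emeasure lborel (Tq R s u v)"
  proof (rule emeasure_Diff[where M=lborel])
    show "emeasure lborel (Tq R s u v) \<noteq> \<infinity>"
      using emeasure_mono[OF Tq_sub, of lborel R s u v] Q_lborel Qs by (auto simp: top_unique)
  qed (use Qs Tq_sets Tq_sub in auto)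
  also have "\<dots> \<le> 1 - ennreal \<alpha>"
    using assms by (simp add: Q_lborel ennreal_minus_mono)
  also have "\<dots> = ennreal (1 - \<alpha>)"
    using assms by (simp add: ennreal_minus[symmetric])
  finally show ?thesis .
qed

lemma bad_bound:
  assumes ij: "i < n" "j < n" "i \<noteq> j" and al: "0 \<le> \<alpha>"
    and big: "\<And>u v. u \<in> {0..1}\<times>{0..1} \<Longrightarrow> d0 \<le> tdist u v \<Longrightarrow> ennreal \<alpha> \<le> emeasure lborel (Tq R s u v)"
  shows "emeasure (rgg_space n) {x \<in> space (rgg_space n). x i \<in> {0..1}\<times>{0..1} \<and> d0 \<le> tdist (x i) (x j) \<and>
    (\<forall>k\<in>{..<n}-{i,j}. x k \<notin> Tq R s (x i) (x j))} \<le> ennreal (1 - \<alpha>) ^ (n - 2)"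
proof -
  interpret T: prob_space torus_unif by (rule torus_prob)
  interpret P: product_sigma_finite "\<lambda>_. torus_unif"
    by (simp add: product_sigma_finite_def T.sigma_finite_measure_axioms)
  define J where "J = {..<n} - {i,j}"
  define B where "B = {x \<in> space (rgg_space n). x i \<in> {0..1}\<times>{0..1} \<and> d0 \<le> tdist (x i) (x j) \<and>
    (\<forall>k\<in>J. x k \<notin> Tq R s (x i) (x j))}"
  have IJ: "{i,j} \<union> J = {..<n}" "{i,j} \<inter> J = {}" "finite J" "finite {i,j}"
    using ij by (auto simp: J_def)
  have cardJ: "card J = n - 2" using ij by (simp add: J_def card_Diff_subset)
  have Bs: "B \<in> sets (Pi\<^sub>M ({i,j} \<union> J) (\<lambda>_. torus_unif))"
    using bad_meas[of i n j J d0 R s] ij unfolding B_def IJ(1) rgg_space_def by (auto simp: J_def)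
  have "emeasure (rgg_space n) B = emeasure (Pi\<^sub>M ({i,j} \<union> J) (\<lambda>_. torus_unif)) B"
    by (simp only: rgg_space_def IJ(1))
  also have "\<dots> = (\<integral>\<^sup>+x. emeasure (Pi\<^sub>M J (\<lambda>_. torus_unif))
        ((\<lambda>y. merge {i,j} J (x, y)) -` B \<inter> space (Pi\<^sub>M J (\<lambda>_. torus_unif))) \<partial>Pi\<^sub>M {i,j} (\<lambda>_. torus_unif))"
    by (rule P.emeasure_fold_integral[OF IJ(2) IJ(4) IJ(3) Bs])
  also have "\<dots> \<le> (\<integral>\<^sup>+x. ennreal (1 - \<alpha>) ^ (n - 2) \<partial>Pi\<^sub>M {i,j} (\<lambda>_. torus_unif))"
  proof (rule nn_integral_mono)
    fix x assume x: "x \<in> space (Pi\<^sub>M {i,j} (\<lambda>_. torus_unif))"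
    let ?S = "(\<lambda>y. merge {i,j} J (x, y)) -` B \<inter> space (Pi\<^sub>M J (\<lambda>_. torus_unif))"
    show "emeasure (Pi\<^sub>M J (\<lambda>_. torus_unif)) ?S \<le> ennreal (1 - \<alpha>) ^ (n - 2)"
    proof (cases "x i \<in> {0..1}\<times>{0..1} \<and> d0 \<le> tdist (x i) (x j)")
      case True
      have "?S \<subseteq> Pi\<^sub>E J (\<lambda>_. UNIV - Tq R s (x i) (x j))"
        using IJ(2) by (auto simp: B_def merge_def space_PiM PiE_def Pi_def extensional_def split: if_splits)
      then have "emeasure (Pi\<^sub>M J (\<lambda>_. torus_unif)) ?S \<le>
          emeasure (Pi\<^sub>M J (\<lambda>_. torus_unif)) (Pi\<^sub>E J (\<lambda>_. UNIV - Tq R s (x i) (x j)))"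
        by (rule emeasure_mono) (use Tq_sets IJ(3) in \<open>auto intro!: sets_PiM_I_finite\<close>)
      also have "\<dots> = (\<Prod>k\<in>J. emeasure torus_unif (UNIV - Tq R s (x i) (x j)))"
        using Tq_sets IJ(3) by (subst P.emeasure_PiM) auto
      also have "\<dots> \<le> (\<Prod>k\<in>J. ennreal (1 - \<alpha>))"
        unfolding prod_constant using True big torus_compl al by (intro power_mono) auto
      also have "\<dots> = ennreal (1 - \<alpha>) ^ (n - 2)" by (simp add: cardJ)
      finally show ?thesis .
    next
      case False
      then have "?S = {}" using IJ(2) by (auto simp: B_def merge_def)
      then show ?thesis by simp
    qed
  qed
  also have "\<dots> = ennreal (1 - \<alpha>) ^ (n - 2)"
  proof -
    interpret PP: prob_space "Pi\<^sub>M {i,j} (\<lambda>_. torus_unif)"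
      by (intro prob_space_PiM) (auto intro: T.prob_space_axioms)
    show ?thesis by (simp add: PP.emeasure_space_1)
  qed
  finally show ?thesis by (simp add: B_def J_def)
qed




definition Hs :: "real \<Rightarrow> bool \<Rightarrow> real \<times> real \<Rightarrow> real \<times> real \<Rightarrow> (real \<times> real) set" where
  "Hs R s u v = {w. dist w (mid u v) < R \<and>
        (if s then cr (tvec u v) (w - mid u v) \<ge> 0 else cr (tvec u v) (w - mid u v) \<le> 0)}"

lemma Hs_sets: "Hs R s u v \<in> sets borel"
proof -
  have "Measurable.pred borel (\<lambda>w. w \<in> Hs R s u v)"
    unfolding Hs_def cr_def by measurable
  then show ?thesis by (simp add: Measurable.pred_def)
qed

lemma lebesgue_eq_lborel: "A \<in> sets borel \<Longrightarrow> emeasure lebesgue A = emeasure lborel A"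
  by simp

lemma cr_neg: "cr e (- z) = - cr e z" by (simp add: cr_def)

lemma Hs_area: assumes "R \<ge> 0"
  shows "ennreal (pi * R^2 / 2) \<le> emeasure lborel (Hs R s u v)"
proof -
  define m where "m = mid u v"
  define f where "f = (\<lambda>w::real\<times>real. (-1) *\<^sub>R w + 2 *\<^sub>R m)"
  have fm: "\<And>w. f w - m = -(w - m)" by (simp add: f_def scaleR_2 algebra_simps)
  have fHs: "\<And>w s. f w \<in> Hs R (\<not> s) u v \<longleftrightarrow> w \<in> Hs R s u v"
  proof -
    fix w s
    have d: "dist (f w) m = dist w m" by (simp add: dist_norm fm norm_minus_commute)
    have c: "cr (tvec u v) (f w - m) = - cr (tvec u v) (w - m)" unfolding fm by (rule cr_neg)
    show "f w \<in> Hs R (\<not> s) u v \<longleftrightarrow> w \<in> Hs R s u v"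
      unfolding Hs_def m_def[symmetric] mem_Collect_eq d c by auto
  qed
  have fim: "f ` Hs R s u v = Hs R (\<not> s) u v"
  proof (intro equalityI subsetI)
    fix y assume "y \<in> f ` Hs R s u v"
    then show "y \<in> Hs R (\<not> s) u v" using fHs by blast
  next
    fix w assume w: "w \<in> Hs R (\<not> s) u v"
    have "f (f w) = w" by (simp add: f_def algebra_simps)
    moreover have "f w \<in> Hs R s u v"
      using w fHs[of w "\<not> s"] by simp
    ultimately show "w \<in> f ` Hs R s u v" by (metis image_eqI)
  qed
  have "emeasure lebesgue (f ` Hs R s u v) = emeasure lebesgue (Hs R s u v)"
    using emeasure_lebesgue_affine[of "-1" "2 *\<^sub>R m" "Hs R s u v"] by (simp add: f_def)
  then have eq: "emeasure lborel (Hs R (\<not> s) u v) = emeasure lborel (Hs R s u v)"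
    using Hs_sets fim by simp
  have fin: "emeasure lborel (Hs R s u v) < \<infinity>"
  proof -
    have "Hs R s u v \<subseteq> ball m R" by (auto simp: Hs_def m_def dist_commute)
    then have "emeasure lborel (Hs R s u v) \<le> emeasure lborel (ball m R)"
      by (intro emeasure_mono) auto
    also have "\<dots> < \<infinity>" using assms by (simp add: emeasure_ball)
    finally show ?thesis .
  qed
  have "ball m R \<subseteq> Hs R s u v \<union> Hs R (\<not> s) u v"
    by (auto simp: Hs_def m_def dist_commute)
  then have "emeasure lborel (ball m R) \<le> emeasure lborel (Hs R s u v \<union> Hs R (\<not> s) u v)"
    by (intro emeasure_mono) (auto intro: Hs_sets)
  also have "\<dots> \<le> emeasure lborel (Hs R s u v) + emeasure lborel (Hs R (\<not> s) u v)"
    using Hs_sets by (intro emeasure_subadditive) auto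
  finally have "ennreal (pi * R^2) \<le> emeasure lborel (Hs R s u v) + emeasure lborel (Hs R (\<not> s) u v)"
    using emeasure_ball[of R m] assms by (simp add: unit_ball_vol_2 mult.commute power2_eq_square)
  then have "ennreal (pi * R^2) \<le> ennreal (measure lborel (Hs R s u v)) + ennreal (measure lborel (Hs R s u v))"
    using eq fin by (simp add: emeasure_eq_ennreal_measure)
  then have "pi * R^2 \<le> 2 * measure lborel (Hs R s u v)"
    by (simp add: ennreal_plus[symmetric] del: ennreal_plus)
  then have "ennreal (pi * R^2 / 2) \<le> ennreal (measure lborel (Hs R s u v))"
    by (intro ennreal_leI) simp
  then show ?thesis using fin by (simp add: emeasure_eq_ennreal_measure)
qed




lemma abs_fst_le: "\<bar>fst (z::real\<times>real)\<bar> \<le> norm z"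
  using norm_fst_le[of "fst z" "snd z"] by simp
lemma abs_snd_le: "\<bar>snd (z::real\<times>real)\<bar> \<le> norm z"
  using norm_snd_le[of "snd z" "fst z"] by simp
lemma tdisp_bound: "\<bar>tdisp t\<bar> \<le> 1/2"
  using of_int_round_abs_le[of t] by (simp add: tdisp_def abs_minus_commute)
lemma int_close: "\<bar>(of_int a::real) - of_int b\<bar> < 1 \<Longrightarrow> a = b"
proof -
  assume "\<bar>(of_int a::real) - of_int b\<bar> < 1"
  then have "\<bar>of_int (a - b)\<bar> < (1::real)" by simp
  then have "\<bar>a - b\<bar> < 1" by (metis of_int_abs of_int_less_1_iff)
  then show "a = b" by simp
qed

lemma int3: "(-1::int) \<le> a \<Longrightarrow> a \<le> 1 \<Longrightarrow> a \<in> {-1,0,1}"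
  by (simp only: insert_iff empty_iff) arith

lemma Tq_area:
  assumes u: "u \<in> {0..1}\<times>{0..1}" and R: "0 < R" "R \<le> 1/4"
  shows "emeasure lborel (Tq R s u v) = emeasure lborel (Hs R s u v)"
proof -
  define H where "H = Hs R s u v"
  define m where "m = mid u v"
  define S where "S = {-1,0,1::int} \<times> {-1,0,1::int}"
  define sh where "sh = (\<lambda>z::int\<times>int. (of_int (fst z), of_int (snd z)) :: real \<times> real)"
  define P where "P = (\<lambda>z. {y::real\<times>real. fst y \<in> {0..<1} \<and> snd y \<in> {0..<1} \<and> y + sh z \<in> H})"
  define C where "C = (\<lambda>z. {w::real\<times>real. fst w - of_int (fst z) \<in> {0..<1} \<and> snd w - of_int (snd z) \<in> {0..<1}})"
  have finS: "finite S" by (simp add: S_def)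
  have Hm: "w \<in> H \<Longrightarrow> dist w m < R" for w by (simp add: H_def Hs_def m_def)
  have Hb: "H \<in> sets borel" unfolding H_def by (rule Hs_sets)
  have Cb: "C z \<in> sets borel" for z
  proof -
    have "Measurable.pred borel (\<lambda>w::real\<times>real. w \<in> C z)" unfolding C_def by measurable
    then show ?thesis by (simp add: Measurable.pred_def)
  qed
  have Pb: "P z \<in> sets borel" for z
  proof -
    have "Measurable.pred borel (\<lambda>w::real\<times>real. w + sh z \<in> H)"
      using Hb by (intro pred_sets2) (auto simp: sh_def)
    then have "Measurable.pred borel (\<lambda>w::real\<times>real. w \<in> P z)" unfolding P_def by measurable
    then show ?thesis by (simp add: Measurable.pred_def)
  qed
  have TqP: "Tq R s u v = (\<Union>z\<in>S. P z)"
  proof (intro equalityI subsetI)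
    fix y assume "y \<in> Tq R s u v"
    then obtain a b where ab: "a \<in> {-1,0,1}" "b \<in> {-1,0,1}" and y: "fst y \<in> {0..<1}" "snd y \<in> {0..<1}"
      and yH: "y + (of_int a, of_int b) \<in> H"
      unfolding Tq_def H_def Hs_def mem_Collect_eq by blast
    then have "(a,b) \<in> S" "y \<in> P (a,b)" unfolding S_def P_def sh_def by (blast, simp)
    then show "y \<in> (\<Union>z\<in>S. P z)" by blast
  next
    fix y assume "y \<in> (\<Union>z\<in>S. P z)"
    then obtain a b where ab: "a \<in> {-1,0,1}" "b \<in> {-1,0,1}" and "y \<in> P (a,b)"
      unfolding S_def by blast
    then have y: "fst y \<in> {0..<1}" "snd y \<in> {0..<1}" and yH: "y + (of_int a, of_int b) \<in> H"
      unfolding P_def sh_def by simp_all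
    show "y \<in> Tq R s u v"
      unfolding Tq_def mem_Collect_eq using ab y yH unfolding H_def Hs_def mem_Collect_eq by blast
  qed
  have close: "z = z'" if "dist (y + sh z) m < R" "dist (y + sh z') m < R" for y z z'
  proof -
    have "norm (sh z - sh z') < 1"
    proof -
      have "norm (sh z - sh z') \<le> dist (y + sh z) m + dist (y + sh z') m"
        using dist_triangle[of "y + sh z" "y + sh z'" m] by (simp add: dist_norm norm_minus_commute)
      then show ?thesis using that R by linarith
    qed
    then have "\<bar>of_int (fst z) - of_int (fst z')\<bar> < (1::real)" "\<bar>of_int (snd z) - of_int (snd z')\<bar> < (1::real)"
      using abs_fst_le[of "sh z - sh z'"] abs_snd_le[of "sh z - sh z'"] by (auto simp: sh_def)
    then show ?thesis using int_close by (metis prod.expand)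
  qed
  have dP: "disjoint_family_on P S"
    unfolding disjoint_family_on_def
  proof (intro ballI impI equals0I)
    fix z z' y assume zz: "z \<noteq> z'" and y: "y \<in> P z \<inter> P z'"
    then have "dist (y + sh z) m < R" "dist (y + sh z') m < R" using Hm unfolding P_def by auto
    then show False using close zz by blast
  qed
  have dC: "disjoint_family_on (\<lambda>z. H \<inter> C z) S"
    unfolding disjoint_family_on_def
  proof (intro ballI impI equals0I)
    fix z z' w assume zz: "z \<noteq> z'" and w: "w \<in> H \<inter> C z \<inter> (H \<inter> C z')"
    then have w1: "fst w - of_int (fst z) \<in> {0..<1}" "snd w - of_int (snd z) \<in> {0..<1}"
      and w2: "fst w - of_int (fst z') \<in> {0..<1}" "snd w - of_int (snd z') \<in> {0..<1}"
      unfolding C_def by blast+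
    have "\<bar>of_int (fst z) - of_int (fst z')\<bar> < (1::real)"
      using w1(1) w2(1) unfolding atLeastLessThan_iff abs_less_iff by linarith
    moreover have "\<bar>of_int (snd z) - of_int (snd z')\<bar> < (1::real)"
      using w1(2) w2(2) unfolding atLeastLessThan_iff abs_less_iff by linarith
    ultimately show False using zz int_close by (metis prod.expand)
  qed
  have m1: "fst m = fst u + tdisp (fst v - fst u) / 2" "snd m = snd u + tdisp (snd v - snd u) / 2"
    by (simp_all add: m_def mid_def tvec_def)
  have ub: "0 \<le> fst u" "fst u \<le> 1" "0 \<le> snd u" "snd u \<le> 1" using u by (auto simp: mem_Times_iff)
  have mb: "-1/4 \<le> fst m" "fst m \<le> 5/4" "-1/4 \<le> snd m" "snd m \<le> 5/4"
    using ub m1 tdisp_bound[of "fst v - fst u"] tdisp_bound[of "snd v - snd u"]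
    unfolding abs_le_iff by linarith+
  have HC: "H = (\<Union>z\<in>S. H \<inter> C z)"
  proof safe
    fix w assume w: "w \<in> H"
    have "\<bar>fst (w - m)\<bar> < R" "\<bar>snd (w - m)\<bar> < R"
      using Hm[OF w] abs_fst_le[of "w - m"] abs_snd_le[of "w - m"] by (simp_all add: dist_norm)
    then have d: "\<bar>fst w - fst m\<bar> < R" "\<bar>snd w - snd m\<bar> < R" by simp_all
    define z where "z = (\<lfloor>fst w\<rfloor>, \<lfloor>snd w\<rfloor>)"
    have b: "-1 < fst w" "fst w < 2" "-1 < snd w" "snd w < 2"
      using d mb R unfolding abs_less_iff by linarith+
    have "-1 \<le> \<lfloor>fst w\<rfloor>" "\<lfloor>fst w\<rfloor> \<le> 1" "-1 \<le> \<lfloor>snd w\<rfloor>" "\<lfloor>snd w\<rfloor> \<le> 1"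
      using b by (simp_all add: le_floor_iff floor_le_iff)
    then have "z \<in> S" unfolding S_def z_def using int3 by blast
    moreover have "w \<in> C z" unfolding C_def z_def
      using frac_lt_1[of "fst w"] frac_lt_1[of "snd w"] by (auto simp: frac_def)
    ultimately show "w \<in> (\<Union>z\<in>S. H \<inter> C z)" using w by auto
  qed
  have PC: "emeasure lborel (P z) = emeasure lborel (H \<inter> C z)" for z
  proof -
    have "P z = (\<lambda>y. sh z + y) -` (H \<inter> C z)"
      by (auto simp: P_def C_def sh_def add.commute)
    then have "emeasure lborel (P z) = emeasure (distr lborel borel ((+) (sh z))) (H \<inter> C z)"
      using Hb Cb by (subst emeasure_distr) auto
    also have "\<dots> = emeasure lborel (H \<inter> C z)" by (simp add: lborel_distr_plus)
    finally show ?thesis .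
  qed
  have "emeasure lborel (Tq R s u v) = (\<Sum>z\<in>S. emeasure lborel (P z))"
    unfolding TqP using Pb dP finS by (subst sum_emeasure) auto
  also have "\<dots> = (\<Sum>z\<in>S. emeasure lborel (H \<inter> C z))" using PC by simp
  also have "\<dots> = emeasure lborel (\<Union>z\<in>S. H \<inter> C z)"
    using Hb Cb dC finS by (subst sum_emeasure) auto
  also have "\<dots> = emeasure lborel H" using HC by simp
  finally show ?thesis by (simp add: H_def)
qed




lemmas abs_fst_le' = abs_fst_le
lemmas abs_snd_le' = abs_snd_le

lemma par:
  fixes e z :: "real \<times> real"
  assumes "cr e z = 0" "e \<noteq> 0"
  shows "z = ((e \<bullet> z) / (e \<bullet> e)) *\<^sub>R e"
proof -
  obtain e1 e2 where e: "e = (e1, e2)" by (cases e)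
  obtain z1 z2 where z: "z = (z1, z2)" by (cases z)
  have c: "e1 * z2 = e2 * z1" using assms(1) by (simp add: cr_def e z)
  have "e1 \<noteq> 0 \<or> e2 \<noteq> 0" using assms(2) e by (auto simp: zero_prod_def)
  then have nz: "e1 * e1 + e2 * e2 \<noteq> 0"
    by (metis add_nonneg_eq_0_iff zero_le_square mult_eq_0_iff)
  have "z1 = (e1 * z1 + e2 * z2) / (e1 * e1 + e2 * e2) * e1"
    using nz c by (simp add: field_simps)
  moreover have "z2 = (e1 * z1 + e2 * z2) / (e1 * e1 + e2 * e2) * e2"
    using nz c by (simp add: field_simps)
  ultimately show ?thesis by (simp add: e z inner_prod_def)
qed

lemma cr_lin: "cr e (a *\<^sub>R z + b *\<^sub>R z') = a * cr e z + b * cr e z'"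
  by (simp add: cr_def algebra_simps)

lemma lift_mem: "s \<in> S \<Longrightarrow> p + s *\<^sub>R tvec p q + (of_int a, of_int b) \<in> edge_lift p q S"
  unfolding edge_lift_def by blast

lemma tdisp_le: "\<bar>tdisp t\<bar> \<le> \<bar>t + of_int a\<bar>"
  using round_diff_minimal[of t "- a"] by (simp add: tdisp_def)

lemma tdist_le: "tdist p q \<le> norm (q - p + (of_int a, of_int b))"
proof -
  have "\<bar>tdisp (fst q - fst p)\<bar> \<le> \<bar>fst q - fst p + of_int a\<bar>" by (rule tdisp_le)
  moreover have "\<bar>tdisp (snd q - snd p)\<bar> \<le> \<bar>snd q - snd p + of_int b\<bar>" by (rule tdisp_le)
  ultimately have "(tdisp (fst q - fst p))\<^sup>2 + (tdisp (snd q - snd p))\<^sup>2 \<le>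
      (fst q - fst p + of_int a)\<^sup>2 + (snd q - snd p + of_int b)\<^sup>2"
    by (intro add_mono) (simp_all add: abs_le_square_iff)
  moreover have "q - p + (of_int a, of_int b) = (fst q - fst p + of_int a, snd q - snd p + of_int b)"
    by (simp add: prod_eq_iff)
  ultimately show ?thesis
    by (simp add: tdist_def tvec_def norm_Pair real_sqrt_le_mono)
qed

lemma tdisp_small: "\<bar>c\<bar> < 1/2 \<Longrightarrow> tdisp (c + of_int a) = c"
proof -
  assume "\<bar>c\<bar> < 1/2"
  then have "round (c + of_int a) = a" by (intro round_unique') simp
  then show ?thesis by (simp add: tdisp_def)
qed

lemma tvec_small:
  assumes "\<bar>fst c\<bar> < 1/2" "\<bar>snd c\<bar> < 1/2" "q = p + c + (of_int a, of_int b)"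
  shows "tvec p q = c"
proof -
  have "fst q - fst p = fst c + of_int a" "snd q - snd p = snd c + of_int b" using assms(3) by simp_all
  then show ?thesis using assms by (simp add: tvec_def tdisp_small)
qed

lemma Tq_memE:
  assumes "y \<in> Tq R s u v"
  obtains a b where "dist (y + (of_int a, of_int b)) (mid u v) < R"
    "if s then cr (tvec u v) (y + (of_int a, of_int b) - mid u v) \<ge> 0
         else cr (tvec u v) (y + (of_int a, of_int b) - mid u v) \<le> 0"
  using assms unfolding Tq_def by blast

lemma onseg:
  fixes e z :: "real \<times> real"
  assumes "cr e z = 0" "norm z < R" "2 * R \<le> norm e"
  obtains lam0 where "z = lam0 *\<^sub>R e" "\<bar>lam0\<bar> < 1/2"
proof -
  have "0 < R" using assms(2) norm_ge_zero[of z] by linarith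
  then have "e \<noteq> 0" using assms(3) by auto
  define lam0 where "lam0 = (e \<bullet> z) / (e \<bullet> e)"
  have z: "z = lam0 *\<^sub>R e" unfolding lam0_def by (rule par[OF assms(1) \<open>e \<noteq> 0\<close>])
  have "\<bar>lam0\<bar> * norm e < R" using assms(2) z by simp
  then have "\<bar>lam0\<bar> * norm e < norm e / 2" using assms(3) by simp
  then have "\<bar>lam0\<bar> < 1/2" using \<open>e \<noteq> 0\<close> by (simp add: field_simps)
  then show ?thesis using that z by blast
qed

lemma geom:
  fixes x :: "nat \<Rightarrow> real \<times> real"
  assumes ij: "i < n" "j < n" "i \<noteq> j" and kl: "k < n" "l < n" "k \<notin> {i,j}" "l \<notin> {i,j}"
    and R: "0 < R" "4 * R < 1" "2 * R \<le> tdist (x i) (x j)" and r: "tdist (x i) (x j) \<le> r"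
    and k: "x k \<in> Tq R True (x i) (x j)" and l: "x l \<in> Tq R False (x i) (x j)"
  shows "\<not> free_edge n x r i j"
proof -
  define u where "u = x i"
  define e where "e = tvec u (x j)"
  define m where "m = mid u (x j)"
  have m: "m = u + (1/2) *\<^sub>R e" by (simp add: m_def mid_def e_def)
  have d: "norm e = tdist u (x j)" by (simp add: tdist_def e_def)
  obtain a b where w1: "dist (x k + (of_int a, of_int b)) m < R" "cr e (x k + (of_int a, of_int b) - m) \<ge> 0"
    using Tq_memE[OF k] unfolding u_def[symmetric] e_def[symmetric] m_def[symmetric] by (metis (full_types))
  obtain a' b' where w2: "dist (x l + (of_int a', of_int b')) m < R" "cr e (x l + (of_int a', of_int b') - m) \<le> 0"
    using Tq_memE[OF l] unfolding u_def[symmetric] e_def[symmetric] m_def[symmetric] by (metis (full_types))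
  define w1 where "w1 = x k + (of_int a, of_int b)"
  define w2 where "w2 = x l + (of_int a', of_int b')"
  define c1 where "c1 = cr e (w1 - m)"
  define c2 where "c2 = cr e (w2 - m)"
  have dw1: "norm (w1 - m) < R" and dw2: "norm (w2 - m) < R" using w1 w2 by (simp_all add: w1_def w2_def dist_norm)
  have c1: "c1 \<ge> 0" and c2: "c2 \<le> 0" using w1 w2 by (simp_all add: c1_def c2_def w1_def w2_def)
  have Re: "2 * R \<le> norm e" using R d by (simp add: u_def)
  have er: "norm e \<le> r" using r d by (simp add: u_def)
  have seg: "m + lam0 *\<^sub>R e - (of_int a0, of_int b0) \<in> edge_lift (x i) (x j) {0<..<1}" if "\<bar>lam0\<bar> < 1/2" for lam0 a0 b0
  proof -
    have "m + lam0 *\<^sub>R e - (of_int a0, of_int b0) = x i + (1/2 + lam0) *\<^sub>R tvec (x i) (x j) + (of_int (-a0), of_int (-b0))"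
    proof -
      have neg: "(of_int (-a0), of_int (-b0)) = - ((of_int a0, of_int b0)::real\<times>real)" by simp
      show ?thesis unfolding neg by (simp add: m e_def u_def algebra_simps prod_eq_iff)
    qed
    moreover have "1/2 + lam0 \<in> {0<..<1}" using that by auto
    ultimately show ?thesis using lift_mem by metis
  qed
  show ?thesis
  proof (cases "c1 = 0")
    case True
    obtain lam0 where lam: "w1 - m = lam0 *\<^sub>R e" "\<bar>lam0\<bar> < 1/2"
      using onseg[OF _ dw1 Re] True by (auto simp: c1_def)
    have xk: "x k = m + lam0 *\<^sub>R e - (of_int a, of_int b)"
      using lam(1) by (simp add: w1_def algebra_simps)
    have "tdist (x k) (x i) \<le> norm (x i - x k + (of_int (-a), of_int (-b)))" by (rule tdist_le)
    also have "x i - x k + (of_int (-a), of_int (-b)) = - ((1/2 + lam0) *\<^sub>R e)"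
      by (simp add: xk m u_def algebra_simps prod_eq_iff)
    also have "norm \<dots> = \<bar>1/2 + lam0\<bar> * norm e" by simp
    also have "\<dots> \<le> norm e" using lam(2) by (intro mult_left_le_one_le) auto
    finally have "tdist (x k) (x i) \<le> r" using er by linarith
    then have E: "rgg_edge x r k i" using kl by (auto simp: rgg_edge_def)
    have "x k \<in> edge_lift (x k) (x i) {0..1}"
    proof -
      have "x k = x k + 0 *\<^sub>R tvec (x k) (x i) + (of_int 0, of_int 0)" by (simp add: prod_eq_iff)
      then show ?thesis using lift_mem[of 0 "{0..1}" "x k" "x i" 0 0] by simp
    qed
    moreover have "x k \<in> edge_lift (x i) (x j) {0<..<1}" using seg[OF lam(2)] xk by simp
    moreover have "{k, i} \<noteq> {i, j}" using kl ij by (auto simp: doubleton_eq_iff)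
    ultimately show ?thesis unfolding free_edge_def using E kl ij by blast
  next
    case False
    then have c1p: "c1 > 0" using c1 by simp
    define t where "t = c1 / (c1 - c2)"
    have t: "0 < t" "t \<le> 1" using c1p c2 by (auto simp: t_def field_simps)
    define P where "P = w1 + t *\<^sub>R (w2 - w1)"
    have Pm: "P - m = (1 - t) *\<^sub>R (w1 - m) + t *\<^sub>R (w2 - m)" by (simp add: P_def algebra_simps)
    have "cr e (P - m) = (1 - t) * c1 + t * c2" unfolding Pm cr_lin c1_def c2_def ..
    also have "\<dots> = 0" using c1p c2 by (simp add: t_def field_simps)
    finally have crP: "cr e (P - m) = 0" .
    have "norm (P - m) \<le> (1 - t) * norm (w1 - m) + t * norm (w2 - m)"
      unfolding Pm using t by (metis abs_of_nonneg diff_ge_0_iff_ge less_imp_le norm_scaleR norm_triangle_ineq)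
    also have "\<dots> < (1 - t) * R + t * R"
    proof (cases "t = 1")
      case True then show ?thesis using dw2 by simp
    next
      case False then show ?thesis using t dw1 dw2
        by (intro add_less_le_mono mult_strict_left_mono mult_left_mono) auto
    qed
    finally have nP: "norm (P - m) < R" by (simp add: algebra_simps)
    obtain lam0 where lam: "P - m = lam0 *\<^sub>R e" "\<bar>lam0\<bar> < 1/2" using onseg[OF crP nP Re] by blast
    have n21: "norm (w2 - w1) < 2 * R"
      using norm_triangle_ineq4[of "w2 - m" "w1 - m"] dw1 dw2 by simp
    have cs: "\<bar>fst (w2 - w1)\<bar> < 1/2" "\<bar>snd (w2 - w1)\<bar> < 1/2"
      using abs_fst_le'[of "w2 - w1"] abs_snd_le'[of "w2 - w1"] n21 R by linarith+
    have xl: "x l = x k + (w2 - w1) + (of_int (a - a'), of_int (b - b'))"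
      by (simp add: w1_def w2_def algebra_simps)
    have tv: "tvec (x k) (x l) = w2 - w1" by (rule tvec_small[OF cs xl])
    have "k \<noteq> l"
    proof
      assume "k = l"
      then have "w2 - w1 = (of_int (a' - a), of_int (b' - b))" by (simp add: w1_def w2_def)
      then have "\<bar>(of_int a'::real) - of_int a\<bar> < 1" "\<bar>(of_int b'::real) - of_int b\<bar> < 1"
        using cs by auto
      then have "a' = a" "b' = b" using int_close by blast+
      then have "w1 = w2" using \<open>k = l\<close> by (simp add: w1_def w2_def)
      then show False using c1p c2 by (simp add: c1_def c2_def)
    qed
    have "tdist (x k) (x l) = norm (w2 - w1)" by (simp add: tdist_def tv)
    then have "tdist (x k) (x l) \<le> r" using n21 Re er by linarith
    then have E: "rgg_edge x r k l" using \<open>k \<noteq> l\<close> by (simp add: rgg_edge_def)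
    have "P \<in> edge_lift (x k) (x l) {0..1}"
    proof -
      have "P = x k + t *\<^sub>R tvec (x k) (x l) + (of_int a, of_int b)"
        by (simp add: P_def tv w1_def algebra_simps)
      then show ?thesis using lift_mem[of t "{0..1}"] t by auto
    qed
    moreover have "P \<in> edge_lift (x i) (x j) {0<..<1}"
    proof -
      have z: "((of_int 0, of_int 0)::real\<times>real) = 0" by (simp add: zero_prod_def)
      have "P = m + lam0 *\<^sub>R e - (of_int 0, of_int 0)" using lam(1) unfolding z by (simp add: algebra_simps)
      then show ?thesis using seg[OF lam(2), of 0 0] by simp
    qed
    moreover have "{k, l} \<noteq> {i, j}" using kl by auto
    ultimately show ?thesis unfolding free_edge_def using E kl by blast
  qed
qed




lemma rgg_prob: "prob_space (rgg_space n)"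
  unfolding rgg_space_def by (intro prob_space_PiM) (simp add: torus_prob)

lemma QS_meas1:
  "emeasure (rgg_space n) {x \<in> space (rgg_space n). \<forall>k<n. x k \<in> {0..1}\<times>{0..1}} = 1"
proof -
  interpret T: prob_space torus_unif by (rule torus_prob)
  interpret P: product_sigma_finite "\<lambda>_. torus_unif"
    by (simp add: product_sigma_finite_def T.sigma_finite_measure_axioms)
  have Qs: "({0..1}\<times>{0..1} :: (real\<times>real) set) \<in> sets borel"
    by (intro borel_closed closed_Times) auto
  have eq: "{x \<in> space (rgg_space n). \<forall>k<n. x k \<in> {0..1}\<times>{0..1}} = Pi\<^sub>E {..<n} (\<lambda>_. {0..1}\<times>{0..1})"
  proof -
    have sp: "space (rgg_space n) = Pi\<^sub>E {..<n} (\<lambda>_. UNIV)"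
      by (simp add: rgg_space_def space_PiM torus_unif_def)
    show ?thesis unfolding sp
      by (rule set_eqI) (simp only: mem_Collect_eq PiE_iff Ball_def lessThan_iff UNIV_I simp_thms, blast)
  qed
  have "emeasure torus_unif ({0..1::real}\<times>{0..1::real}) = emeasure lborel (({0..1::real}\<times>{0..1::real}) \<inter> ({0..1}\<times>{0..1}))"
    by (rule torus_emeasure[OF Qs])
  then have t1: "emeasure torus_unif ({0..1::real}\<times>{0..1::real}) = 1" by (simp only: Int_absorb Q_lborel)
  have "emeasure (Pi\<^sub>M {..<n} (\<lambda>_. torus_unif)) (Pi\<^sub>E {..<n} (\<lambda>_. {0..1}\<times>{0..1})) =
      (\<Prod>k\<in>{..<n}. emeasure torus_unif ({0..1::real}\<times>{0..1::real}))"
    using Qs by (intro P.emeasure_PiM) simp_all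
  then have "emeasure (rgg_space n) (Pi\<^sub>E {..<n} (\<lambda>_. {0..1}\<times>{0..1})) = 1"
    unfolding rgg_space_def t1 by (simp only: prod.neutral_const)
  then show ?thesis unfolding eq .
qed

lemma QS_sets: "{x \<in> space (rgg_space n). \<forall>k<n. x k \<in> {0..1}\<times>{0..1}} \<in> sets (rgg_space n)"
proof -
  have "Measurable.pred (rgg_space n) (\<lambda>x. \<forall>k\<in>{..<n}. x k \<in> {0..1}\<times>{0..1})"
  proof (rule pred_intros_finite)
    show "finite {..<n}" by simp
  next
    fix k assume "k \<in> {..<n}"
    then have "(\<lambda>x. x k) \<in> rgg_space n \<rightarrow>\<^sub>M borel" by (intro comp_meas) auto
    moreover have "Measurable.pred borel (\<lambda>u::real\<times>real. u \<in> {0..1}\<times>{0..1})"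
      by (intro pred_sets2[OF borel_closed]) (auto intro: closed_Times)
    ultimately show "Measurable.pred (rgg_space n) (\<lambda>x. x k \<in> {0..1}\<times>{0..1})"
      by (rule measurable_compose)
  qed
  then show ?thesis by (simp only: Measurable.pred_def Ball_def lessThan_iff)
qed

theorem lemma3:
  fixes r :: "nat \<Rightarrow> real"
  shows "whp (\<lambda>n x. \<forall>i<n. \<forall>j<n.
            rgg_edge x (r n) i j \<and> tdist (x i) (x j) \<ge> sqrt (8 * ln (real n) / real n)
            \<longrightarrow> \<not> free_edge n x (r n) i j)"
proof -
  define d0 where "d0 n = sqrt (8 * ln (real n) / real n)" for n
  define R where "R n = d0 n / 2" for n
  define al where "al n = pi * (R n)^2 / 2" for n
  define Q where "Q = ({0..1}\<times>{0..1} :: (real\<times>real) set)"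
  define B where "B n i j s = {x \<in> space (rgg_space n). x i \<in> Q \<and> d0 n \<le> tdist (x i) (x j) \<and>
      (\<forall>k\<in>{..<n}-{i,j}. x k \<notin> Tq (R n) s (x i) (x j))}" for n i j s
  define Ix where "Ix n = {z :: nat \<times> nat \<times> bool. fst z < n \<and> fst (snd z) < n \<and> fst z \<noteq> fst (snd z)}" for n
  define U where "U n = (\<Union>z\<in>Ix n. B n (fst z) (fst (snd z)) (snd (snd z)))" for n
  define QS where "QS n = {x \<in> space (rgg_space n). \<forall>k<n. x k \<in> Q}" for n
  define cond where "cond n \<longleftrightarrow> 2 \<le> n \<and> 8 * ln (real n) / real n < 1/64" for n
  define A where "A n = (if cond n then QS n - U n else {})" for n
  define P where "P = (\<lambda>n x. \<forall>i<n. \<forall>j<n.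
            rgg_edge x (r n) i j \<and> tdist (x i) (x j) \<ge> sqrt (8 * ln (real n) / real n)
            \<longrightarrow> \<not> free_edge n x (r n) i j)"
  have finIx: "finite (Ix n)" for n
  proof -
    have "Ix n \<subseteq> {..<n} \<times> {..<n} \<times> UNIV" by (auto simp: Ix_def)
    then show ?thesis by (rule finite_subset) auto
  qed
  have cardIx: "card (Ix n) \<le> 2 * n^2" for n
  proof -
    have "Ix n \<subseteq> {..<n} \<times> {..<n} \<times> UNIV" by (auto simp: Ix_def)
    then have "card (Ix n) \<le> card ({..<n} \<times> {..<n} \<times> (UNIV :: bool set))"
      by (intro card_mono) auto
    also have "\<dots> = 2 * n^2" by (simp add: card_cartesian_product power2_eq_square)
    finally show ?thesis .
  qed
  have Bs: "B n i j s \<in> sets (rgg_space n)" if "i < n" "j < n" for n i j s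
    unfolding B_def Q_def using bad_meas[of i n j "{..<n}-{i,j}"] that by auto
  have Us: "U n \<in> sets (rgg_space n)" for n
    unfolding U_def using finIx Bs by (intro sets.finite_UN) (auto simp: Ix_def)
  have QSs: "QS n \<in> sets (rgg_space n)" for n
    unfolding QS_def Q_def by (rule QS_sets)
  have As: "A n \<in> sets (rgg_space n)" for n
    unfolding A_def using Us QSs by auto
  have par: "0 < R n" "R n \<le> 1/16" "4 * R n < 1" "2 * R n = d0 n" "al n = pi * ln (real n) / real n"
      "3 * ln (real n) / real n \<le> al n" "al n \<le> 1" if "cond n" for n
  proof -
    have n2: "2 \<le> n" and c: "8 * ln (real n) / real n < 1/64" using that by (auto simp: cond_def)
    have lnp: "0 < ln (real n)" using n2 by simp
    have np: "0 < real n" using n2 by simp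
    have q: "0 < 8 * ln (real n) / real n" using lnp np by simp
    have dsq: "(d0 n)^2 = 8 * ln (real n) / real n" using q by (simp add: d0_def)
    have "d0 n < sqrt (1/64)" unfolding d0_def using c by (simp add: real_sqrt_less_iff)
    also have "sqrt (1/64) = (1/8::real)" by (simp add: real_sqrt_divide)
    finally have "d0 n < 1/8" .
    moreover have "0 < d0 n" using q by (simp add: d0_def)
    ultimately show "0 < R n" "R n \<le> 1/16" "4 * R n < 1" "2 * R n = d0 n" by (auto simp: R_def)
    show ae: "al n = pi * ln (real n) / real n"
      by (simp add: al_def R_def power_divide dsq)
    have "3 * (ln (real n) / real n) \<le> pi * (ln (real n) / real n)"
      using pi_gt3 lnp np by (intro mult_right_mono) auto
    then show "3 * ln (real n) / real n \<le> al n" by (simp add: ae)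
    have "pi * (ln (real n) / real n) \<le> 4 * (ln (real n) / real n)"
      using pi_less_4 lnp np by (intro mult_right_mono) auto
    also have "\<dots> \<le> 1" using c by simp
    finally show "al n \<le> 1" by (simp add: ae)
  qed
  have Bb: "measure (rgg_space n) (B n i j s) \<le> (1 - al n) ^ (n - 2)"
    if "cond n" "i < n" "j < n" "i \<noteq> j" for n i j s
  proof -
    interpret PS: prob_space "rgg_space n" by (rule rgg_prob)
    have big: "ennreal (al n) \<le> emeasure lborel (Tq (R n) s u v)"
      if "u \<in> {0..1}\<times>{0..1}" "d0 n \<le> tdist u v" for u v
    proof -
      have "ennreal (al n) \<le> emeasure lborel (Hs (R n) s u v)"
        unfolding al_def using Hs_area[of "R n" s u v] par[OF \<open>cond n\<close>] by simp
      also have "\<dots> = emeasure lborel (Tq (R n) s u v)"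
        using Tq_area[OF that(1), of "R n" s v] par[OF \<open>cond n\<close>] by simp
      finally show ?thesis .
    qed
    have alp: "0 \<le> al n" by (simp add: al_def)
    have "emeasure (rgg_space n) (B n i j s) \<le> ennreal (1 - al n) ^ (n - 2)"
      unfolding B_def Q_def by (rule bad_bound[OF that(2,3,4) alp big])
    also have "\<dots> = ennreal ((1 - al n) ^ (n - 2))"
      using par[OF \<open>cond n\<close>] by (simp add: ennreal_power)
    finally show ?thesis
      using par[OF \<open>cond n\<close>] by (simp add: PS.emeasure_eq_measure ennreal_le_iff)
  qed
  have Alow: "1 - 2 * real n ^ 2 * exp (- (3 * ln (real n) / real n) * (real n - 2)) \<le> measure (rgg_space n) (A n)"
    if "cond n" for n
  proof -
    interpret PS: prob_space "rgg_space n" by (rule rgg_prob)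
    have n2: "2 \<le> n" using that by (simp add: cond_def)
    have e1: "(1 - al n) ^ (n - 2) \<le> exp (- (3 * ln (real n) / real n) * (real n - 2))"
    proof -
      have "(1 - al n) ^ (n - 2) \<le> exp (- al n) ^ (n - 2)"
        using par[OF that] exp_ge_add_one_self[of "- al n"] by (intro power_mono) auto
      also have "\<dots> = exp (- al n * real (n - 2))" by (simp add: exp_of_nat_mult[symmetric] mult.commute)
      also have "\<dots> \<le> exp (- (3 * ln (real n) / real n) * (real n - 2))"
      proof -
        have "3 * ln (real n) / real n * (real n - 2) \<le> al n * (real n - 2)"
          using par(6)[OF that] n2 by (intro mult_right_mono) auto
        then show ?thesis using n2 by (simp add: of_nat_diff)
      qed
      finally show ?thesis .
    qed
    have "measure (rgg_space n) (U n) \<le> (\<Sum>z\<in>Ix n. measure (rgg_space n) (B n (fst z) (fst (snd z)) (snd (snd z))))"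
      unfolding U_def using finIx Bs by (intro PS.finite_measure_subadditive_finite) (auto simp: Ix_def)
    also have "\<dots> \<le> (\<Sum>z\<in>Ix n. (1 - al n) ^ (n - 2))"
      using Bb[OF that] by (intro sum_mono) (auto simp: Ix_def)
    also have "\<dots> = real (card (Ix n)) * (1 - al n) ^ (n - 2)" by simp
    also have "\<dots> \<le> (2 * real n ^ 2) * (1 - al n) ^ (n - 2)"
    proof (rule mult_right_mono)
      have "real (card (Ix n)) \<le> real (2 * n^2)" using cardIx[of n] by (simp only: of_nat_le_iff)
      then show "real (card (Ix n)) \<le> 2 * real n ^ 2" by simp
      show "0 \<le> (1 - al n) ^ (n - 2)" using par(7)[OF that] by simp
    qed
    also have "\<dots> \<le> (2 * real n ^ 2) * exp (- (3 * ln (real n) / real n) * (real n - 2))"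
      using e1 by (intro mult_left_mono) auto
    finally have Ub: "measure (rgg_space n) (U n) \<le> 2 * real n ^ 2 * exp (- (3 * ln (real n) / real n) * (real n - 2))" .
    have "measure (rgg_space n) (QS n) = 1"
      using QS_meas1[of n] by (simp add: QS_def Q_def PS.emeasure_eq_measure)
    then have "measure (rgg_space n) (QS n - U n) = 1 - measure (rgg_space n) (QS n \<inter> U n)"
      using QSs Us by (simp add: PS.finite_measure_Diff')
    moreover have "measure (rgg_space n) (QS n \<inter> U n) \<le> measure (rgg_space n) (U n)"
      using Us by (intro PS.finite_measure_mono) auto
    ultimately show ?thesis using Ub that by (simp add: A_def)
  qed
  have lim: "(\<lambda>n. measure (rgg_space n) (A n)) \<longlonglongrightarrow> 1"
  proof (rule tendsto_sandwich)
    have ev: "eventually cond sequentially"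
    proof -
      have "eventually (\<lambda>n::nat. 8 * ln (real n) / real n < 1/64) at_top" by real_asymp
      moreover have "eventually (\<lambda>n::nat. 2 \<le> n) at_top" by (rule eventually_ge_at_top)
      ultimately show ?thesis by eventually_elim (simp add: cond_def)
    qed
    show "eventually (\<lambda>n. 1 - 2 * real n ^ 2 * exp (- (3 * ln (real n) / real n) * (real n - 2))
        \<le> measure (rgg_space n) (A n)) sequentially"
      using ev by eventually_elim (rule Alow)
    show "eventually (\<lambda>n. measure (rgg_space n) (A n) \<le> 1) sequentially"
    proof (intro always_eventually allI)
      fix n
      interpret PS: prob_space "rgg_space n" by (rule rgg_prob)
      show "measure (rgg_space n) (A n) \<le> 1" by (rule PS.prob_le_1)
    qed
    have "(\<lambda>n::nat. 2 * real n ^ 2 * exp (- (3 * ln (real n) / real n) * (real n - 2))) \<longlonglongrightarrow> 0"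
      by real_asymp
    then show "(\<lambda>n. 1 - 2 * real n ^ 2 * exp (- (3 * ln (real n) / real n) * (real n - 2))) \<longlonglongrightarrow> 1"
      using tendsto_diff[OF tendsto_const[of 1]] by fastforce
  qed simp
  have sub: "A n \<subseteq> {x \<in> space (rgg_space n). P n x}" for n
  proof
    fix x assume xA: "x \<in> A n"
    then have c: "cond n" and xQ: "x \<in> QS n" and xU: "x \<notin> U n" by (auto simp: A_def split: if_splits)
    have xs: "x \<in> space (rgg_space n)" using xQ by (simp add: QS_def)
    have "P n x" unfolding P_def
    proof (intro allI impI)
      fix i j assume ij: "i < n" "j < n" and E: "rgg_edge x (r n) i j \<and> sqrt (8 * ln (real n) / real n) \<le> tdist (x i) (x j)"
      have ineq: "i \<noteq> j" using E by (simp add: rgg_edge_def)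
      have tr: "tdist (x i) (x j) \<le> r n" using E by (simp add: rgg_edge_def)
      have dd: "d0 n \<le> tdist (x i) (x j)" using E by (simp add: d0_def)
      have xi: "x i \<in> Q" using xQ ij by (simp add: QS_def)
      have nB: "x \<notin> B n i j s" for s
        using xU ij ineq unfolding U_def Ix_def by (auto intro!: bexI[of _ "(i, j, s)"])
      obtain k where k: "k \<in> {..<n}-{i,j}" "x k \<in> Tq (R n) True (x i) (x j)"
        using nB[of True] xs xi dd by (auto simp: B_def)
      obtain l where l: "l \<in> {..<n}-{i,j}" "x l \<in> Tq (R n) False (x i) (x j)"
        using nB[of False] xs xi dd by (auto simp: B_def)
      show "\<not> free_edge n x (r n) i j"
        using k l ij ineq par[OF c] dd tr by (intro geom[of i n j k l "R n" x "r n"]) auto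
    qed
    then show "x \<in> {x \<in> space (rgg_space n). P n x}" using xs by simp
  qed
  show ?thesis unfolding whp_def P_def[symmetric]
    using As sub lim by blast
qed


end
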